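(* Assume the setting in the context. For any reward function $R:\Delta_\Sigma\times\Delta_\Sigma\to\mathbb{R}$ and any hypotheses $h_A:\Sigma_A\to\Delta_\Sigma$, $h_B:\Sigma_B\to\Delta_\Sigma$, the expected $f$-mutual information gain satisfies $$\mathbb{E}\big[MIG^f(R(h_A,h_B))_{|S_A,S_B}\big]=\sum_{x_A,x_B}\Pr[X_A=x_A,X_B=x_B]\,R(h_A(x_A),h_B(x_B))-\sum_{x_A,x_B}\Pr[X_A=x_A]\Pr[X_B=x_B]\,f^\star\big(R(h_A(x_A),h_B(x_B))\big)\le MI^f(X_A;X_B),$$ with equality if and only if $R(h_A(x_A),h_B(x_B))\in\partial f(K(x_A,x_B))$ for every $(x_A,x_B)\in\Sigma_A\times\Sigma_B$. In particular, the maximum of the expected gain over all $R,h_A,h_B$ (whenever attained, e.g. when $|\Sigma|\ge 2$) equals $MI^f(X_A;X_B)$ and is attained exactly by those triples satisfying this subdifferential condition.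
   Context: Let $\Sigma_A,\Sigma_B,\Sigma$ be finite nonempty sets and $(X_A,X_B)$ a random pair with values in $\Sigma_A\times\Sigma_B$ with $\Pr[X_A=x_A]>0$, $\Pr[X_B=x_B]>0$ for all $x_A,x_B$. $\Delta_\Sigma$ is the set of probability vectors on $\Sigma$. $K(x_A,x_B):=\frac{\Pr[X_A=x_A,X_B=x_B]}{\Pr[X_A=x_A]\Pr[X_B=x_B]}$. Let $f:[0,\infty)\to\mathbb{R}$ be convex with $f(1)=0$; $f^\star(u):=\sup_{t\ge 0}(tu-f(t))$ is its convex conjugate and $\partial f(t)$ its subdifferential at $t$. The $f$-mutual information is $MI^f(X_A;X_B):=\sum_{x_A,x_B}\Pr[X_A=x_A]\Pr[X_B=x_B]\,f(K(x_A,x_B))$, i.e. the $f$-divergence between the joint distribution of $(X_A,X_B)$ and the product of its marginals. Sampling model: $\mathcal{L}_A,\mathcal{L}_B$ are finite index sets with $\mathcal{L}_A\cap\mathcal{L}_B\neq\emptyset$ and with at least one pair $(\ell_A,\ell_B)\in\mathcal{L}_A\times\mathcal{L}_B$, $\ell_A\ne\ell_B$; for each $\ell\in\mathcal{L}_A\cup\mathcal{L}_B$ an independent copy $(x_A^\ell,x_B^\ell)$ of $(X_A,X_B)$ is drawn, and one observes $S_A=\{x_A^\ell\}_{\ell\in\mathcal{L}_A}$, $S_B=\{x_B^\ell\}_{\ell\in\mathcal{L}_B}$. The $f$-mutual information gain is $$MIG^f(R(h_A,h_B))_{|S_A,S_B}:=\frac{1}{|\mathcal{L}_A\cap\mathcal{L}_B|}\sum_{\ell\in\mathcal{L}_A\cap\mathcal{L}_B}R(h_A(x_A^\ell),h_B(x_B^\ell))-\frac{1}{N}\sum_{\ell_A\in\mathcal{L}_A,\ell_B\in\mathcal{L}_B,\ell_A\ne\ell_B}f^\star\big(R(h_A(x_A^{\ell_A}),h_B(x_B^{\ell_B}))\big),$$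 where $N=|\mathcal{L}_A||\mathcal{L}_B|-|\mathcal{L}_A\cap\mathcal{L}_B|$ is the number of such pairs $(\ell_A,\ell_B)$. *)

theory Defs
  imports "HOL-Probability.Probability"
begin

text \<open>Convex conjugate, f*(u) = sup over t \<ge> 0 of (t u - f t); it may be +\<infinity>, hence ereal.\<close>
definition fstar :: "(real \<Rightarrow> real) \<Rightarrow> real \<Rightarrow> ereal" where
  "fstar f u = (SUP t\<in>{0..}. ereal (t * u - f t))"

definition subdiff :: "(real \<Rightarrow> real) \<Rightarrow> real \<Rightarrow> real set" where
  "subdiff f t = {u. \<forall>s\<ge>0. f t + u * (s - t) \<le> f s}"

definition pA :: "('a \<times> 'b) pmf \<Rightarrow> 'a \<Rightarrow> real" where
  "pA X xa = pmf (map_pmf fst X) xa"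

definition pB :: "('a \<times> 'b) pmf \<Rightarrow> 'b \<Rightarrow> real" where
  "pB X xb = pmf (map_pmf snd X) xb"

definition Kratio :: "('a \<times> 'b) pmf \<Rightarrow> 'a \<Rightarrow> 'b \<Rightarrow> real" where
  "Kratio X xa xb = pmf X (xa, xb) / (pA X xa * pB X xb)"

definition fMI :: "(real \<Rightarrow> real) \<Rightarrow> ('a::finite \<times> 'b::finite) pmf \<Rightarrow> real" where
  "fMI f X = (\<Sum>xa\<in>UNIV. \<Sum>xb\<in>UNIV. pA X xa * pB X xb * f (Kratio X xa xb))"

definition MIG ::
  "(real \<Rightarrow> real) \<Rightarrow> ('c pmf \<Rightarrow> 'c pmf \<Rightarrow> real) \<Rightarrow> ('a \<Rightarrow> 'c pmf) \<Rightarrow> ('b \<Rightarrow> 'c pmf)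
    \<Rightarrow> 'l set \<Rightarrow> 'l set \<Rightarrow> ('l \<Rightarrow> 'a \<times> 'b) \<Rightarrow> ereal" where
  "MIG f R hA hB LA LB s =
     ereal ((1 / real (card (LA \<inter> LB))) *
            (\<Sum>l\<in>LA \<inter> LB. R (hA (fst (s l))) (hB (snd (s l)))))
     - ereal (1 / real (card LA * card LB - card (LA \<inter> LB))) *
       (\<Sum>(la, lb)\<in>{(la, lb). la \<in> LA \<and> lb \<in> LB \<and> la \<noteq> lb}.
          fstar f (R (hA (fst (s la))) (hB (snd (s lb)))))"

text \<open>Expectation of MIG over independent copies (x_A^l, x_B^l), l \<in> LA \<union> LB, of X.\<close>
definition expected_MIG ::
  "(real \<Rightarrow> real) \<Rightarrow> ('a::finite \<times> 'b::finite) pmf \<Rightarrow> ('c pmf \<Rightarrow> 'c pmf \<Rightarrow> real)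
    \<Rightarrow> ('a \<Rightarrow> 'c pmf) \<Rightarrow> ('b \<Rightarrow> 'c pmf) \<Rightarrow> 'l set \<Rightarrow> 'l set \<Rightarrow> ereal" where
  "expected_MIG f X R hA hB LA LB =
     (\<Sum>s\<in>PiE (LA \<union> LB) (\<lambda>_. UNIV).
        ereal (\<Prod>l\<in>LA \<union> LB. pmf X (s l)) * MIG f R hA hB LA LB s)"

end

theory Submission
  imports Defs
begin


lemma fstar_lb: "t \<ge> 0 \<Longrightarrow> ereal (t*u - f t) \<le> fstar f u"
  unfolding fstar_def by (rule SUP_upper) auto

lemma fstar_not_minf: "fstar f u \<noteq> -\<infinity>"
  using fstar_lb[of 0 u f] by auto

lemma expect_sum:
  fixes X :: "'x::finite pmf" and \<phi> :: "('l \<Rightarrow> 'x) \<Rightarrow> real"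
  assumes I: "finite I"
  shows "(\<Sum>s\<in>PiE I (\<lambda>_. UNIV). (\<Prod>l\<in>I. pmf X (s l)) * \<phi> s)
       = measure_pmf.expectation (Pi_pmf I undefined (\<lambda>_. X)) \<phi>"
proof -
  have fin: "finite (PiE I (\<lambda>_. UNIV::'x set))" using I by (simp add: finite_PiE)
  have "measure_pmf.expectation (Pi_pmf I undefined (\<lambda>_. X)) \<phi>
     = (\<Sum>s\<in>PiE I (\<lambda>_. UNIV). \<phi> s * pmf (Pi_pmf I undefined (\<lambda>_. X)) s)"
    apply (rule integral_measure_pmf_real[OF fin])
    using set_Pi_pmf_subset[OF I, of undefined "\<lambda>_. X"]
    by (auto simp: PiE_def extensional_def)
  also have "\<dots> = (\<Sum>s\<in>PiE I (\<lambda>_. UNIV). (\<Prod>l\<in>I. pmf X (s l)) * \<phi> s)"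
    apply (rule sum.cong, simp)
    apply (subst pmf_Pi'[OF I])
    by (auto simp: PiE_def extensional_def)
  finally show ?thesis by simp
qed

lemma comp1:
  fixes X :: "'x::finite pmf" and g :: "'x \<Rightarrow> real"
  assumes I: "finite I" and l: "l \<in> I"
  shows "measure_pmf.expectation (Pi_pmf I undefined (\<lambda>_. X)) (\<lambda>s. g (s l)) = (\<Sum>x\<in>UNIV. pmf X x * g x)"
proof -
  have "measure_pmf.expectation (Pi_pmf I undefined (\<lambda>_. X)) (\<lambda>s. g (s l))
     = measure_pmf.expectation (map_pmf (\<lambda>s. s l) (Pi_pmf I undefined (\<lambda>_. X))) g"
    by simp
  also have "\<dots> = measure_pmf.expectation X g" using Pi_pmf_component[OF I, of l undefined "\<lambda>_. X"] l by simp
  also have "\<dots> = (\<Sum>x\<in>UNIV. g x * pmf X x)" by (rule integral_measure_pmf_real) auto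
  finally show ?thesis by (simp add: mult.commute)
qed

lemma comp2:
  fixes X :: "'x::finite pmf"
  assumes I: "finite I" and la: "la \<in> I" and lb: "lb \<in> I" and ne: "la \<noteq> lb"
  shows "map_pmf (\<lambda>s. (s la, s lb)) (Pi_pmf I undefined (\<lambda>_. X)) = pair_pmf X X"
proof -
  have I': "I = insert la (I - {la})" using la by auto
  have "map_pmf (\<lambda>s. (s la, s lb)) (Pi_pmf I undefined (\<lambda>_. X))
      = map_pmf (\<lambda>s. (s la, s lb)) (map_pmf (\<lambda>(y,f). f(la:=y)) (pair_pmf X (Pi_pmf (I - {la}) undefined (\<lambda>_. X))))"
    by (subst I', subst Pi_pmf_insert) (use I in auto)
  also have "\<dots> = map_pmf (apsnd (\<lambda>f. f lb)) (pair_pmf X (Pi_pmf (I - {la}) undefined (\<lambda>_. X)))"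
    by (simp add: pmf.map_comp o_def case_prod_unfold apsnd_def map_prod_def ne[symmetric])
  also have "\<dots> = pair_pmf X (map_pmf (\<lambda>f. f lb) (Pi_pmf (I - {la}) undefined (\<lambda>_. X)))"
    by (simp add: pair_map_pmf2)
  also have "\<dots> = pair_pmf X X"
    using Pi_pmf_component[of "I - {la}" lb undefined "\<lambda>_. X"] I lb ne by simp
  finally show ?thesis .
qed

lemma comp2':
  fixes X :: "'x::finite pmf" and h :: "'x \<Rightarrow> 'x \<Rightarrow> real"
  assumes I: "finite I" and la: "la \<in> I" and lb: "lb \<in> I" and ne: "la \<noteq> lb"
  shows "measure_pmf.expectation (Pi_pmf I undefined (\<lambda>_. X)) (\<lambda>s. h (s la) (s lb))
      = (\<Sum>x\<in>UNIV. \<Sum>y\<in>UNIV. pmf X x * pmf X y * h x y)"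
proof -
  have "measure_pmf.expectation (Pi_pmf I undefined (\<lambda>_. X)) (\<lambda>s. h (s la) (s lb))
     = measure_pmf.expectation (map_pmf (\<lambda>s. (s la, s lb)) (Pi_pmf I undefined (\<lambda>_. X))) (case_prod h)"
    by simp
  also have "\<dots> = measure_pmf.expectation (pair_pmf X X) (case_prod h)" by (simp add: comp2[OF assms])
  also have "\<dots> = (\<Sum>p\<in>UNIV. case_prod h p * pmf (pair_pmf X X) p)" by (rule integral_measure_pmf_real) auto
  also have "\<dots> = (\<Sum>x\<in>UNIV. \<Sum>y\<in>UNIV. pmf X x * pmf X y * h x y)"
    apply (simp add: UNIV_Times_UNIV[symmetric] sum.cartesian_product del: UNIV_Times_UNIV)
    apply (rule sum.cong) by (auto simp: pmf_pair)
  finally show ?thesis .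
qed

lemma marg_snd:
  fixes X :: "('a::finite \<times> 'b::finite) pmf"
  shows "(\<Sum>y\<in>UNIV. pmf X y * G (snd y)) = (\<Sum>b\<in>UNIV. pB X b * G b)"
proof -
  have "(\<Sum>y\<in>UNIV. pmf X y * G (snd y)) = measure_pmf.expectation X (\<lambda>y. G (snd y))"
    by (subst integral_measure_pmf_real[of UNIV]) (auto simp: mult.commute)
  also have "\<dots> = measure_pmf.expectation (map_pmf snd X) G" by simp
  also have "\<dots> = (\<Sum>b\<in>UNIV. pB X b * G b)"
    by (subst integral_measure_pmf_real[of UNIV]) (auto simp: mult.commute pB_def)
  finally show ?thesis .
qed

lemma marg_fst:
  fixes X :: "('a::finite \<times> 'b::finite) pmf"
  shows "(\<Sum>y\<in>UNIV. pmf X y * G (fst y)) = (\<Sum>b\<in>UNIV. pA X b * G b)"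
proof -
  have "(\<Sum>y\<in>UNIV. pmf X y * G (fst y)) = measure_pmf.expectation X (\<lambda>y. G (fst y))"
    by (subst integral_measure_pmf_real[of UNIV]) (auto simp: mult.commute)
  also have "\<dots> = measure_pmf.expectation (map_pmf fst X) G" by simp
  also have "\<dots> = (\<Sum>b\<in>UNIV. pA X b * G b)"
    by (subst integral_measure_pmf_real[of UNIV]) (auto simp: mult.commute pA_def)
  finally show ?thesis .
qed

lemma sum_Minf:
  fixes g :: "'a \<Rightarrow> ereal"
  assumes "finite A" "i \<in> A" "g i = -\<infinity>" "\<And>j. j \<in> A \<Longrightarrow> g j \<noteq> \<infinity>"
  shows "sum g A = -\<infinity>"
  using assms
proof (induct A rule: finite_induct)
  case (insert x F)
  show ?case
  proof (cases "x = i")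
    case True
    have "sum g F \<noteq> \<infinity>" using insert by (simp add: sum_Pinfty)
    then show ?thesis using True insert by simp
  next
    case False
    then have "sum g F = -\<infinity>" using insert by auto
    moreover have "g x \<noteq> \<infinity>" using insert by auto
    ultimately show ?thesis using insert by simp
  qed
qed simp



lemma sum_pull:
  fixes P :: "'s \<Rightarrow> real"
  shows "(\<Sum>s\<in>S. P s * (k * (\<Sum>l\<in>L. g s l))) = k * (\<Sum>l\<in>L. \<Sum>s\<in>S. P s * g s l)"
  by (simp add: sum_distrib_left mult.left_commute sum.swap[of _ L S])

lemma subdiff_fin:
  assumes h: "u \<in> subdiff f K"
  shows "fstar f u \<noteq> \<infinity>"
proof -
  have "fstar f u \<le> ereal (K*u - f K)" unfolding fstar_def
  proof (rule SUP_least)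
    fix t :: real assume "t \<in> {0..}"
    then have "f K + u * (t - K) \<le> f t" using h unfolding subdiff_def by auto
    then show "ereal (t*u - f t) \<le> ereal (K*u - f K)" by (simp add: algebra_simps)
  qed
  then show ?thesis by auto
qed

lemma sum_fstar_not_minf:
  assumes "finite A"
  shows "(\<Sum>x\<in>A. fstar f (g x)) \<noteq> -\<infinity>"
proof -
  have "(\<Sum>x\<in>A. ereal (0 * g x - f 0)) \<le> (\<Sum>x\<in>A. fstar f (g x))"
    by (rule sum_mono) (rule fstar_lb, simp)
  then show ?thesis by auto
qed

lemma fstar_eq_iff:
  assumes Kn: "K \<ge> 0" and Fe: "fstar f u = ereal F"
  shows "F = K * u - f K \<longleftrightarrow> u \<in> subdiff f K"
proof
  assume h: "F = K * u - f K"
  show "u \<in> subdiff f K" unfolding subdiff_def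
  proof (safe)
    fix s :: real assume "s \<ge> 0"
    then have "ereal (s*u - f s) \<le> ereal F" using fstar_lb[of s u f] Fe by simp
    then have "s*u - f s \<le> K * u - f K" using h by simp
    then show "f K + u * (s - K) \<le> f s" by (simp add: algebra_simps)
  qed
next
  assume h: "u \<in> subdiff f K"
  have "fstar f u \<le> ereal (K*u - f K)" unfolding fstar_def
  proof (rule SUP_least)
    fix t :: real assume "t \<in> {0..}"
    then have "f K + u * (t - K) \<le> f t" using h unfolding subdiff_def by auto
    then show "ereal (t*u - f t) \<le> ereal (K*u - f K)" by (simp add: algebra_simps)
  qed
  moreover have "ereal (K*u - f K) \<le> fstar f u" using fstar_lb[OF Kn] .
  ultimately show "F = K * u - f K" using Fe by simp
qed

theorem mainTheorem3:
  fixes f :: "real \<Rightarrow> real"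
    and X :: "('a::finite \<times> 'b::finite) pmf"
    and R :: "'c::finite pmf \<Rightarrow> 'c pmf \<Rightarrow> real"
    and hA :: "'a \<Rightarrow> 'c pmf" and hB :: "'b \<Rightarrow> 'c pmf"
    and LA LB :: "'l set"
  assumes conv: "convex_on {0..} f" and f1: "f 1 = 0"
    and margA: "\<And>xa. pA X xa > 0" and margB: "\<And>xb. pB X xb > 0"
    and finA: "finite LA" and finB: "finite LB"
    and inter: "LA \<inter> LB \<noteq> {}"
    and pair: "\<exists>la\<in>LA. \<exists>lb\<in>LB. la \<noteq> lb"
  shows "expected_MIG f X R hA hB LA LB =
           ereal (\<Sum>xa\<in>UNIV. \<Sum>xb\<in>UNIV. pmf X (xa, xb) * R (hA xa) (hB xb))
           - (\<Sum>xa\<in>UNIV. \<Sum>xb\<in>UNIV. ereal (pA X xa * pB X xb) * fstar f (R (hA xa) (hB xb)))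
       \<and> expected_MIG f X R hA hB LA LB \<le> ereal (fMI f X)
       \<and> (expected_MIG f X R hA hB LA LB = ereal (fMI f X) \<longleftrightarrow>
            (\<forall>xa xb. R (hA xa) (hB xb) \<in> subdiff f (Kratio X xa xb)))"
proof -
  define I where "I = LA \<union> LB"
  define S where "S = PiE I (\<lambda>_. UNIV :: ('a \<times> 'b) set)"
  define P where "P s = (\<Prod>l\<in>I. pmf X (s l))" for s :: "'l \<Rightarrow> 'a \<times> 'b"
  define C where "C = LA \<inter> LB"
  define Pr where "Pr = {(la, lb). la \<in> LA \<and> lb \<in> LB \<and> la \<noteq> lb}"
  define N where "N = card LA * card LB - card C"
  define r where "r a b = R (hA a) (hB b)" for a b
  define K where "K = Kratio X"
  have finI: "finite I" using finA finB I_def by auto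
  have finS: "finite S" unfolding S_def using finI by (simp add: finite_PiE)
  have finC: "finite C" using finA C_def by auto
  have cpos: "card C > 0" using inter finC C_def by (simp add: card_gt_0_iff)
  have finPr: "finite Pr" unfolding Pr_def
    by (rule finite_subset[of _ "LA \<times> LB"]) (use finA finB in auto)
  have cardPr: "card Pr = N"
  proof -
    have "Pr = LA \<times> LB - (\<lambda>l. (l,l)) ` C" unfolding Pr_def C_def by auto
    moreover have "card ((\<lambda>l. (l,l)) ` C) = card C" by (rule card_image) (auto simp: inj_on_def)
    moreover have "(\<lambda>l. (l,l)) ` C \<subseteq> LA \<times> LB" unfolding C_def by auto
    ultimately show ?thesis unfolding N_def
      using finA finB by (simp add: card_Diff_subset card_cartesian_product finite_subset)
  qed
  have Npos: "N > 0"
  proof -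
    obtain la lb where "la \<in> LA" "lb \<in> LB" "la \<noteq> lb" using pair by auto
    then have "Pr \<noteq> {}" unfolding Pr_def by auto
    then have "card Pr > 0" using finPr by (simp add: card_gt_0_iff)
    with cardPr show ?thesis by simp
  qed
  have Kn: "K a b \<ge> 0" for a b unfolding K_def Kratio_def using margA[of a] margB[of b]
    by (simp add: divide_nonneg_pos)
  have pXK: "pmf X (a,b) = pA X a * pB X b * K a b" for a b
    unfolding K_def Kratio_def using margA[of a] margB[of b] by simp
  have Ef: "measure_pmf.expectation (Pi_pmf I undefined (\<lambda>_. X)) \<phi> = (\<Sum>s\<in>S. P s * \<phi> s)" for \<phi>
    unfolding S_def P_def by (rule expect_sum[OF finI, symmetric])
  show ?thesis
  proof (cases "\<forall>a b. fstar f (r a b) \<noteq> \<infinity>")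
    case True
    define F where "F a b = real_of_ereal (fstar f (r a b))" for a b
    have Fe: "fstar f (R (hA a) (hB b)) = ereal (F a b)" for a b
      using True fstar_not_minf[of f "r a b"] unfolding F_def r_def by (cases "fstar f (R (hA a) (hB b))") auto
    define MIGr where "MIGr s = (1 / real (card C)) * (\<Sum>l\<in>C. r (fst (s l)) (snd (s l)))
        - (1 / real N) * (\<Sum>(la, lb)\<in>Pr. F (fst (s la)) (snd (s lb)))" for s :: "'l \<Rightarrow> 'a \<times> 'b"
    have MIGe: "MIG f R hA hB LA LB s = ereal (MIGr s)" for s
      unfolding MIG_def MIGr_def C_def Pr_def N_def r_def by (simp add: Fe case_prod_beta')
    have ex: "expected_MIG f X R hA hB LA LB = ereal (\<Sum>s\<in>S. P s * MIGr s)"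
      unfolding expected_MIG_def S_def P_def I_def by (simp add: MIGe)
    define E1 where "E1 = (\<Sum>a\<in>UNIV. \<Sum>b\<in>UNIV. pmf X (a, b) * r a b)"
    define E2 where "E2 = (\<Sum>a\<in>UNIV. \<Sum>b\<in>UNIV. pA X a * pB X b * F a b)"
    have part1: "(\<Sum>s\<in>S. P s * ((1 / real (card C)) * (\<Sum>l\<in>C. r (fst (s l)) (snd (s l))))) = E1"
    proof -
      have "(\<Sum>s\<in>S. P s * ((1 / real (card C)) * (\<Sum>l\<in>C. r (fst (s l)) (snd (s l)))))
          = (1 / real (card C)) * (\<Sum>l\<in>C. \<Sum>s\<in>S. P s * r (fst (s l)) (snd (s l)))" by (rule sum_pull)
      also have "\<dots> = (1 / real (card C)) * (\<Sum>l\<in>C. E1)"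
      proof -
        have "(\<Sum>s\<in>S. P s * r (fst (s l)) (snd (s l))) = E1" if "l \<in> C" for l
        proof -
          have "(\<Sum>s\<in>S. P s * r (fst (s l)) (snd (s l))) = (\<Sum>x\<in>UNIV. pmf X x * r (fst x) (snd x))"
            using Ef[of "\<lambda>s. r (fst (s l)) (snd (s l))"] comp1[OF finI, of l X "\<lambda>x. r (fst x) (snd x)"] that
            unfolding C_def I_def by auto
          also have "\<dots> = E1" unfolding E1_def
            apply (simp add: UNIV_Times_UNIV[symmetric] sum.cartesian_product del: UNIV_Times_UNIV)
            by (rule sum.cong) auto
          finally show ?thesis .
        qed
        then show ?thesis by simp
      qed
      also have "\<dots> = E1" using cpos by simp
      finally show ?thesis .
    qed
    have part2: "(\<Sum>s\<in>S. P s * ((1 / real N) * (\<Sum>(la, lb)\<in>Pr. F (fst (s la)) (snd (s lb))))) = E2"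
    proof -
      have "(\<Sum>s\<in>S. P s * ((1 / real N) * (\<Sum>(la, lb)\<in>Pr. F (fst (s la)) (snd (s lb)))))
          = (1 / real N) * (\<Sum>p\<in>Pr. \<Sum>s\<in>S. P s * (case p of (la, lb) \<Rightarrow> F (fst (s la)) (snd (s lb))))"
        by (rule sum_pull)
      also have "\<dots> = (1 / real N) * (\<Sum>p\<in>Pr. E2)"
      proof -
        have "(\<Sum>s\<in>S. P s * (case p of (la, lb) \<Rightarrow> F (fst (s la)) (snd (s lb)))) = E2" if hp: "p \<in> Pr" for p
        proof -
          obtain la lb where p: "p = (la, lb)" "la \<in> LA" "lb \<in> LB" "la \<noteq> lb"
            using hp unfolding Pr_def by (cases p) auto
          have "(\<Sum>s\<in>S. P s * (case p of (la, lb) \<Rightarrow> F (fst (s la)) (snd (s lb))))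
              = (\<Sum>x\<in>UNIV. \<Sum>y\<in>UNIV. pmf X x * pmf X y * F (fst x) (snd y))"
            using Ef[of "\<lambda>s. F (fst (s la)) (snd (s lb))"]
              comp2'[OF finI, of la lb X "\<lambda>x y. F (fst x) (snd y)"] p
            unfolding I_def by auto
          also have "\<dots> = (\<Sum>x\<in>UNIV. pmf X x * (\<Sum>y\<in>UNIV. pmf X y * F (fst x) (snd y)))"
            by (simp add: sum_distrib_left mult.assoc)
          also have "\<dots> = (\<Sum>x\<in>UNIV. pmf X x * (\<Sum>b\<in>UNIV. pB X b * F (fst x) b))"
            by (simp add: marg_snd)
          also have "\<dots> = (\<Sum>a\<in>UNIV. pA X a * (\<Sum>b\<in>UNIV. pB X b * F a b))"
            by (rule marg_fst)
          also have "\<dots> = E2" unfolding E2_def by (simp add: sum_distrib_left mult.assoc)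
          finally show ?thesis .
        qed
        then show ?thesis by simp
      qed
      also have "\<dots> = E2" using cardPr Npos by simp
      finally show ?thesis .
    qed
    have exE: "expected_MIG f X R hA hB LA LB = ereal (E1 - E2)"
      unfolding ex MIGr_def using part1 part2 by (simp add: right_diff_distrib sum_subtractf)
    have rhs: "ereal (\<Sum>xa\<in>UNIV. \<Sum>xb\<in>UNIV. pmf X (xa, xb) * R (hA xa) (hB xb))
           - (\<Sum>xa\<in>UNIV. \<Sum>xb\<in>UNIV. ereal (pA X xa * pB X xb) * fstar f (R (hA xa) (hB xb)))
           = ereal (E1 - E2)"
      unfolding E1_def E2_def r_def by (simp add: Fe)
    define D where "D a b = pA X a * pB X b * (f (K a b) - K a b * r a b + F a b)" for a b
    have Dn: "D a b \<ge> 0" for a b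
    proof -
      have "ereal (K a b * r a b - f (K a b)) \<le> ereal (F a b)"
        using fstar_lb[OF Kn[of a b], of "r a b" f] Fe[of a b] unfolding r_def by simp
      then show ?thesis unfolding D_def using margA[of a] margB[of b] by simp
    qed
    have fmiD: "fMI f X - (E1 - E2) = (\<Sum>a\<in>UNIV. \<Sum>b\<in>UNIV. D a b)"
      unfolding fMI_def E1_def E2_def D_def K_def[symmetric]
      by (simp add: pXK sum_subtractf[symmetric] sum.distrib[symmetric] algebra_simps)
    have le: "E1 - E2 \<le> fMI f X"
    proof -
      have "0 \<le> (\<Sum>a\<in>UNIV. \<Sum>b\<in>UNIV. D a b)" by (intro sum_nonneg) (simp add: Dn)
      then show ?thesis using fmiD by linarith
    qed
    have eqiff: "E1 - E2 = fMI f X \<longleftrightarrow> (\<forall>a b. D a b = 0)"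
    proof -
      have "E1 - E2 = fMI f X \<longleftrightarrow> (\<Sum>a\<in>UNIV. \<Sum>b\<in>UNIV. D a b) = 0" using fmiD by linarith
      also have "\<dots> \<longleftrightarrow> (\<forall>a. (\<Sum>b\<in>UNIV. D a b) = 0)"
      proof -
        have "\<forall>a. 0 \<le> (\<Sum>b\<in>UNIV. D a b)" by (simp add: sum_nonneg Dn)
        then show ?thesis using sum_nonneg_eq_0_iff[of UNIV "\<lambda>a. \<Sum>b\<in>UNIV. D a b"] by auto
      qed
      also have "\<dots> \<longleftrightarrow> (\<forall>a b. D a b = 0)"
      proof -
        have "(\<Sum>b\<in>UNIV. D a b) = 0 \<longleftrightarrow> (\<forall>b. D a b = 0)" for a
          using sum_nonneg_eq_0_iff[of UNIV "D a"] Dn by auto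
        then show ?thesis by auto
      qed
      finally show ?thesis .
    qed
    have Dsub: "D a b = 0 \<longleftrightarrow> r a b \<in> subdiff f (K a b)" for a b
    proof -
      have "D a b = 0 \<longleftrightarrow> F a b = K a b * r a b - f (K a b)"
        unfolding D_def using margA[of a] margB[of b] by auto
      also have "\<dots> \<longleftrightarrow> r a b \<in> subdiff f (K a b)"
        by (rule fstar_eq_iff[OF Kn]) (simp add: Fe r_def)
      finally show ?thesis .
    qed
    show ?thesis using exE rhs le eqiff Dsub unfolding r_def K_def by auto
  next
    case False
    then obtain a0 b0 where inf0: "fstar f (r a0 b0) = \<infinity>" by auto
    have rhs: "(\<Sum>xa\<in>UNIV. \<Sum>xb\<in>UNIV. ereal (pA X xa * pB X xb) * fstar f (R (hA xa) (hB xb))) = \<infinity>"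
    proof -
      have "ereal (pA X a0 * pB X b0) * fstar f (R (hA a0) (hB b0)) = \<infinity>"
        using inf0 margA[of a0] margB[of b0] unfolding r_def by simp
      then have "(\<Sum>xb\<in>UNIV. ereal (pA X a0 * pB X xb) * fstar f (R (hA a0) (hB xb))) = \<infinity>"
        by (subst sum_Pinfty) auto
      then show ?thesis by (subst sum_Pinfty) auto
    qed
    have MIGf: "MIG f R hA hB LA LB s = ereal ((1 / real (card C)) * (\<Sum>l\<in>C. r (fst (s l)) (snd (s l))))
        - ereal (1 / real N) * (\<Sum>(la, lb)\<in>Pr. fstar f (r (fst (s la)) (snd (s lb))))" for s
      unfolding MIG_def Pr_def N_def C_def r_def by simp
    have notinf: "ereal (P s) * MIG f R hA hB LA LB s \<noteq> \<infinity>" for s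
    proof -
      have T: "(\<Sum>(la, lb)\<in>Pr. fstar f (r (fst (s la)) (snd (s lb)))) \<noteq> -\<infinity>"
        using sum_fstar_not_minf[OF finPr, of f "\<lambda>(la,lb). r (fst (s la)) (snd (s lb))"]
        by (simp add: case_prod_beta')
      have "ereal (1 / real N) * (\<Sum>(la, lb)\<in>Pr. fstar f (r (fst (s la)) (snd (s lb)))) \<noteq> -\<infinity>"
        using T Npos by (cases "(\<Sum>(la, lb)\<in>Pr. fstar f (r (fst (s la)) (snd (s lb))))") auto
      then have M: "MIG f R hA hB LA LB s \<noteq> \<infinity>" unfolding MIGf
        by (cases "ereal (1 / real N) * (\<Sum>(la, lb)\<in>Pr. fstar f (r (fst (s la)) (snd (s lb))))") auto
      have "P s \<ge> 0" unfolding P_def by (simp add: prod_nonneg)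
      then show ?thesis using M by (cases "MIG f R hA hB LA LB s") auto
    qed
    obtain la lb where l: "la \<in> LA" "lb \<in> LB" "la \<noteq> lb" using pair by auto
    have "a0 \<in> set_pmf (map_pmf fst X)" using margA[of a0] unfolding pA_def by (metis pmf_eq_0_set_pmf less_irrefl)
    then obtain p where p: "p \<in> set_pmf X" "fst p = a0" by auto
    have "b0 \<in> set_pmf (map_pmf snd X)" using margB[of b0] unfolding pB_def by (metis pmf_eq_0_set_pmf less_irrefl)
    then obtain q where q: "q \<in> set_pmf X" "snd q = b0" by auto
    obtain z0 where z0: "z0 \<in> set_pmf X" using set_pmf_not_empty by fast
    define s0 where "s0 l = (if l \<in> I then (if l = la then p else if l = lb then q else z0) else undefined)" for l
    have s0S: "s0 \<in> S" unfolding S_def s0_def by (auto simp: PiE_def extensional_def)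
    have Ppos: "P s0 > 0" unfolding P_def
      by (rule prod_pos) (use p q z0 in \<open>auto simp: s0_def pmf_positive\<close>)
    have "(\<Sum>(la, lb)\<in>Pr. fstar f (r (fst (s0 la)) (snd (s0 lb)))) = \<infinity>"
    proof (subst sum_Pinfty, intro conjI finPr bexI)
      show "(la, lb) \<in> Pr" using l unfolding Pr_def by auto
      show "(case (la, lb) of (la, lb) \<Rightarrow> fstar f (r (fst (s0 la)) (snd (s0 lb)))) = \<infinity>"
        using l p q inf0 unfolding s0_def I_def by auto
    qed
    then have "MIG f R hA hB LA LB s0 = -\<infinity>" unfolding MIGf using Npos by simp
    then have "ereal (P s0) * MIG f R hA hB LA LB s0 = -\<infinity>" using Ppos by simp
    then have "(\<Sum>s\<in>S. ereal (P s) * MIG f R hA hB LA LB s) = -\<infinity>"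
      by (intro sum_Minf[OF finS s0S]) (use notinf in auto)
    moreover have "expected_MIG f X R hA hB LA LB = (\<Sum>s\<in>S. ereal (P s) * MIG f R hA hB LA LB s)"
      unfolding expected_MIG_def S_def P_def I_def by simp
    ultimately have lhs: "expected_MIG f X R hA hB LA LB = -\<infinity>" by simp
    have "\<not> (\<forall>xa xb. R (hA xa) (hB xb) \<in> subdiff f (Kratio X xa xb))"
      using subdiff_fin[of "r a0 b0" f] inf0 unfolding r_def by auto
    then show ?thesis using lhs rhs by simp
  qed
qed


end
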